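(* Let $0<t_1\le t_2\le\cdots$ be real numbers with $c=\sum_{n=1}^{\infty}t_n^{-2}<\infty$, let $g(t)=\prod_{n=1}^{\infty}\left(1-\frac{t^{2}}{t_n^{2}}\right)$, and let $0\le\beta<1$. Then for every $p>0$, \[ \int_{0}^{\infty}\frac{|g(t)|^{p}}{t^{\beta}}\,dt\;\ge\;\frac{1}{2c^{(1-\beta)/2}}\,\frac{\Gamma(p+1)\,\Gamma\!\left(\frac{1-\beta}{2}\right)}{\Gamma\!\left(\frac{1-\beta}{2}+p+1\right)} \] (the left side possibly being $+\infty$), and consequently \[ \liminf_{p\to\infty}p^{\frac{1-\beta}{2}}\int_{0}^{\infty}\frac{|g(t)|^{p}}{t^{\beta}}\,dt\;\ge\;\frac{\Gamma\!\left(\frac{1-\beta}{2}\right)}{2c^{(1-\beta)/2}}. \]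
   Context: $\Gamma$ denotes the gamma function. *)

theory Defs
  imports "HOL-Analysis.Analysis"
begin

text \<open>The canonical product g(x) = prod_{n>=1} (1 - x^2 / t_n^2); the sequence t_1, t_2, ...
  is represented as ts 0, ts 1, ...\<close>
definition g_prod :: "(nat \<Rightarrow> real) \<Rightarrow> real \<Rightarrow> real" where
  "g_prod ts x = (\<Prod>n. 1 - x\<^sup>2 / (ts n)\<^sup>2)"

end

theory Submission
  imports Defs "HOL-Real_Asymp.Real_Asymp"
begin


lemma weier_fin:
  fixes a :: "nat \<Rightarrow> real"
  assumes "\<And>i. 0 \<le> a i" "\<And>i. a i \<le> 1"
  shows "(\<Prod>i<n. 1 - a i) \<ge> 1 - (\<Sum>i<n. a i)"
proof (induction n)
  case 0 then show ?case by simp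
next
  case (Suc n)
  have P0: "(\<Prod>i<n. 1 - a i) \<ge> 0" using assms by (intro prod_nonneg) (simp add: algebra_simps)
  show ?case
  proof (cases "1 - (\<Sum>i<n. a i) \<ge> 0")
    case True
    have "(\<Prod>i<Suc n. 1 - a i) = (\<Prod>i<n. 1 - a i) * (1 - a n)" by simp
    also have "\<dots> \<ge> (1 - (\<Sum>i<n. a i)) * (1 - a n)"
      using Suc assms(2)[of n] by (intro mult_right_mono) auto
    finally have "(\<Prod>i<Suc n. 1 - a i) \<ge> (1 - (\<Sum>i<n. a i)) * (1 - a n)" .
    moreover have "(1 - (\<Sum>i<n. a i)) * (1 - a n) \<ge> 1 - (\<Sum>i<Suc n. a i)"
      using True assms(1)[of n] sum_nonneg[of "{..<n}" a] assms(1)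
      by (simp add: algebra_simps)
    ultimately show ?thesis by linarith
  next
    case False
    have "(\<Prod>i<Suc n. 1 - a i) \<ge> 0" using assms by (intro prod_nonneg) (simp add: algebra_simps)
    moreover have "1 - (\<Sum>i<Suc n. a i) \<le> 0" using False assms(1)[of n] by simp
    ultimately show ?thesis by linarith
  qed
qed

lemma g_lower:
  fixes ts :: "nat \<Rightarrow> real" and x :: real
  assumes pos: "ts 0 > 0" and mono: "mono ts"
    and summ: "summable (\<lambda>n. 1 / (ts n)\<^sup>2)"
    and cx: "(\<Sum>n. 1 / (ts n)\<^sup>2) * x\<^sup>2 < 1"
  shows "g_prod ts x \<ge> 1 - (\<Sum>n. 1 / (ts n)\<^sup>2) * x\<^sup>2"
proof -
  define c where "c = (\<Sum>n. 1 / (ts n)\<^sup>2)"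
  define a where "a n = x\<^sup>2 / (ts n)\<^sup>2" for n
  have tspos: "ts n > 0" for n using pos mono[unfolded mono_def, rule_format, of 0 n] by simp
  have a0: "a n \<ge> 0" for n by (simp add: a_def)
  have asumm: "summable a" unfolding a_def using summable_mult[OF summ, of "x\<^sup>2"] by simp
  have asum: "(\<Sum>n. a n) = c * x\<^sup>2" unfolding a_def c_def using suminf_mult[OF summ, of "x\<^sup>2"]
    by (simp add: mult.commute)
  have "1 / (ts n)\<^sup>2 \<le> c" for n unfolding c_def
    using sum_le_suminf[OF summ, of "{n}"] by auto
  hence ale: "a n \<le> c * x\<^sup>2" for n unfolding a_def
    using mult_right_mono[of "1 / (ts n)\<^sup>2" c "x\<^sup>2"] by simp
  have alt: "a n < 1" for n using ale[of n] cx unfolding c_def by linarith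
  have cp: "convergent_prod (\<lambda>n. 1 + (- a n))"
    by (rule summable_imp_convergent_prod_real) (use asumm a0 alt in \<open>auto, metis alt less_irrefl\<close>)
  hence lim: "(\<lambda>n. \<Prod>i\<le>n. 1 - a i) \<longlonglongrightarrow> (\<Prod>n. 1 - a n)"
    using convergent_prod_LIMSEQ by simp
  have "1 - c * x\<^sup>2 \<le> (\<Prod>i\<le>n. 1 - a i)" for n
  proof -
    have "(\<Sum>i<Suc n. a i) \<le> (\<Sum>n. a n)"
      by (rule sum_le_suminf[OF asumm]) (auto simp: a0)
    moreover have "(\<Prod>i<Suc n. 1 - a i) \<ge> 1 - (\<Sum>i<Suc n. a i)"
      by (rule weier_fin) (use a0 alt in \<open>auto intro: less_imp_le\<close>)
    ultimately show ?thesis using asum lessThan_Suc_atMost by auto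
  qed
  hence "1 - c * x\<^sup>2 \<le> (\<Prod>n. 1 - a n)"
    by (intro LIMSEQ_le_const[OF lim]) auto
  thus ?thesis unfolding g_prod_def a_def c_def by simp
qed



lemma key: fixes c x a \<beta> :: real assumes c: "c > 0" and x: "x > 0" and a_def: "a = (1 - \<beta>)/2"
 shows "(c * x\<^sup>2) powr (a - 1) * (2 * c * x) = 2 * c powr a / x powr \<beta>"
  proof -
    have "(c * x\<^sup>2) powr (a - 1) = c powr (a - 1) * (x\<^sup>2) powr (a - 1)"
      using c x by (simp add: powr_mult)
    also have "(x\<^sup>2) powr (a - 1) = x powr (2 * (a - 1))"
    proof -
      have "x\<^sup>2 = x powr 2" using x powr_realpow[OF x, of 2] by simp
      thus ?thesis by (simp add: powr_powr)
    qed
    finally have 1: "(c * x\<^sup>2) powr (a - 1) = c powr (a - 1) * x powr (2 * (a - 1))" .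
    have "(c * x\<^sup>2) powr (a - 1) * (2 * c * x) = 2 * (c powr (a - 1) * c) * (x powr (2 * (a - 1)) * x)"
      unfolding 1 by simp
    also have "c powr (a - 1) * c = c powr a" using c powr_add[of c "a - 1" 1] by simp
    also have "x powr (2 * (a - 1)) * x = x powr (- \<beta>)"
      proof -
      have "2 * (a - 1) + 1 = - \<beta>" unfolding a_def by (simp add: field_simps)
      thus ?thesis using x powr_add[of x "2 * (a - 1)" 1] by simp
    qed
    also have "x powr (- \<beta>) = 1 / x powr \<beta>" by (simp add: powr_minus_divide)
    finally show ?thesis by simp
  qed

lemma beta_int:
  fixes c p \<beta> :: real
  assumes c: "c > 0" and beta: "0 \<le> \<beta>" "\<beta> < 1" and p: "p > 0"
  shows "(\<integral>\<^sup>+x. ennreal ((1 - c * x\<^sup>2) powr p / x powr \<beta>) * indicator {0..1/sqrt c} x \<partial>lborel)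
     = ennreal (Beta ((1 - \<beta>)/2) (p+1) / (2 * c powr ((1 - \<beta>)/2)))"
proof -
  define a where "a = (1 - \<beta>)/2"
  have a: "a > 0" using beta by (simp add: a_def)
  define F where "F t = t powr (a - 1) * (1 - t) powr p" for t :: real
  have hB: "(F has_integral Beta a (p+1)) {0..1}"
    using has_integral_Beta_real[OF a, of "p+1"] p unfolding F_def[abs_def] by simp
  have I1: "(\<integral>\<^sup>+t. ennreal (F t) * indicator {0..1} t \<partial>lborel) = ennreal (Beta a (p+1))"
    by (rule nn_integral_has_integral_lebesgue'[OF _ hB]) (auto simp: F_def)
  define b where "b = 1 / sqrt c"
  have gb: "c * b\<^sup>2 = 1" using c by (simp add: b_def power_divide)
  have sub: "(\<integral>\<^sup>+x. F x * indicator {c * 0\<^sup>2..c * b\<^sup>2} x \<partial>lborel) =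
             (\<integral>\<^sup>+x. F (c * x\<^sup>2) * (2 * c * x) * indicator {0..b} x \<partial>lborel)"
  proof (rule nn_integral_substitution[where g = "\<lambda>x. c * x\<^sup>2"])
    show "set_borel_measurable borel {c * 0\<^sup>2..c * b\<^sup>2} F"
      unfolding set_borel_measurable_def F_def by measurable
  qed (use c in \<open>auto simp: b_def intro!: derivative_eq_intros continuous_intros\<close>)
  have e1: "(\<integral>\<^sup>+x. F x * indicator {c * 0\<^sup>2..c * b\<^sup>2} x \<partial>lborel) = ennreal (Beta a (p+1))"
    unfolding gb I1[symmetric] by (intro nn_integral_cong) (auto simp: indicator_def)
  have e2: "(\<integral>\<^sup>+x. F (c * x\<^sup>2) * (2 * c * x) * indicator {0..b} x \<partial>lborel) =
     (\<integral>\<^sup>+x. ennreal (2 * c powr a) * (ennreal ((1 - c * x\<^sup>2) powr p / x powr \<beta>) * indicator {0..b} x) \<partial>lborel)"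
  proof (intro nn_integral_cong)
    fix x :: real
    show "ennreal (F (c * x\<^sup>2) * (2 * c * x) * indicator {0..b} x) =
      ennreal (2 * c powr a) * (ennreal ((1 - c * x\<^sup>2) powr p / x powr \<beta>) * indicator {0..b} x)"
    proof (cases "x \<in> {0<..b}")
      case True
      have "F (c * x\<^sup>2) * (2 * c * x) = (2 * c powr a) * ((1 - c * x\<^sup>2) powr p / x powr \<beta>)"
      proof -
        have "F (c * x\<^sup>2) * (2 * c * x) = ((c * x\<^sup>2) powr (a - 1) * (2 * c * x)) * (1 - c * x\<^sup>2) powr p"
          unfolding F_def by (simp only: mult_ac)
        also have "\<dots> = 2 * c powr a / x powr \<beta> * (1 - c * x\<^sup>2) powr p"
          using key[OF c _ a_def, of x] True by simp
        finally show ?thesis by simp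
      qed
      moreover have "ennreal (2 * c powr a * ((1 - c * x\<^sup>2) powr p / x powr \<beta>)) =
          ennreal (2 * c powr a) * ennreal ((1 - c * x\<^sup>2) powr p / x powr \<beta>)"
        by (rule ennreal_mult') (use c in simp)
      ultimately show ?thesis using True by (simp add: indicator_def)
    next
      case False
      then show ?thesis by (cases "x = 0") (auto simp: indicator_def F_def)
    qed
  qed
  have "(\<integral>\<^sup>+x. ennreal (2 * c powr a) * (ennreal ((1 - c * x\<^sup>2) powr p / x powr \<beta>) * indicator {0..b} x) \<partial>lborel)
     = ennreal (2 * c powr a) * (\<integral>\<^sup>+x. ennreal ((1 - c * x\<^sup>2) powr p / x powr \<beta>) * indicator {0..b} x \<partial>lborel)"
    by (rule nn_integral_cmult) measurable
  hence main: "ennreal (2 * c powr a) * (\<integral>\<^sup>+x. ennreal ((1 - c * x\<^sup>2) powr p / x powr \<beta>) * indicator {0..b} x \<partial>lborel)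
      = ennreal (Beta a (p+1))" using sub e1 e2 by simp
  have K: "2 * c powr a > 0" using c by simp
  have "(\<integral>\<^sup>+x. ennreal ((1 - c * x\<^sup>2) powr p / x powr \<beta>) * indicator {0..b} x \<partial>lborel)
     = ennreal (1 / (2 * c powr a)) * (ennreal (2 * c powr a) * (\<integral>\<^sup>+x. ennreal ((1 - c * x\<^sup>2) powr p / x powr \<beta>) * indicator {0..b} x \<partial>lborel))"
    using K by (simp add: mult.assoc[symmetric] ennreal_mult'[symmetric])
  also have "\<dots> = ennreal (Beta a (p+1) / (2 * c powr a))"
    unfolding main using K by (simp add: ennreal_mult'[symmetric])
  finally show ?thesis unfolding a_def b_def .
qed


lemma gamma_ineq:
  fixes p a :: real assumes p: "p > 0" and a: "0 \<le> a" "a \<le> 1"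
  shows "Gamma (a + p + 1) \<le> Gamma (p + 1) * (p + 1) powr a"
proof -
  have "(ln \<circ> Gamma) ((1 - a) *\<^sub>R (p + 1) + a *\<^sub>R (p + 2)) \<le> (1 - a) * (ln \<circ> Gamma) (p + 1) + a * (ln \<circ> Gamma) (p + 2)"
    by (rule convex_onD[OF log_convex_Gamma_real]) (use a p in auto)
  moreover have "(1 - a) *\<^sub>R (p + 1) + a *\<^sub>R (p + 2) = a + p + 1" by (simp add: algebra_simps)
  moreover have "Gamma (p + 2) = (p + 1) * Gamma (p + 1)"
  proof -
    have "p + 1 \<notin> \<int>\<^sub>\<le>\<^sub>0" using p by (auto elim!: nonpos_Ints_cases)
    thus ?thesis using Gamma_plus1[of "p + 1"] by (simp add: add.assoc)
  qed
  moreover have "Gamma (p + 1) > 0" using p by (intro Gamma_real_pos) simp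
  ultimately have L: "ln (Gamma (a + p + 1)) \<le> (1 - a) * ln (Gamma (p + 1)) + a * ln (Gamma (p + 2))"
    by (simp only: o_apply)
  have "ln (Gamma (p + 2)) = ln (p + 1) + ln (Gamma (p + 1))"
    unfolding \<open>Gamma (p + 2) = (p + 1) * Gamma (p + 1)\<close>
    by (rule ln_mult_pos) (use p \<open>Gamma (p + 1) > 0\<close> in auto)
  with L have "ln (Gamma (a + p + 1)) \<le> ln (Gamma (p + 1)) + a * ln (p + 1)"
    by (simp add: algebra_simps)
  also have "\<dots> = ln (Gamma (p + 1) * (p + 1) powr a)"
  proof -
    have gp: "Gamma (p + 1) > 0" "(p + 1) powr a > 0" using p by (auto intro: Gamma_real_pos)
    have "ln ((p + 1) powr a) = a * ln (p + 1)" using p by (simp add: ln_powr)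
    thus ?thesis using ln_mult_pos[OF gp] by simp
  qed
  finally show ?thesis
    using p a \<open>Gamma (p + 1) > 0\<close> Gamma_real_pos[of "a + p + 1"] by simp
qed

lemma lim1: fixes a :: real shows "((\<lambda>p::real. (p / (p + 1)) powr a) \<longlongrightarrow> 1) at_top"
  by real_asymp

theorem mainTheorem8:
  fixes ts :: "nat \<Rightarrow> real" and \<beta> :: real
  assumes pos: "ts 0 > 0"
    and mono: "mono ts"
    and summ: "summable (\<lambda>n. 1 / (ts n)\<^sup>2)"
    and beta: "0 \<le> \<beta>" "\<beta> < 1"
  defines "c \<equiv> (\<Sum>n. 1 / (ts n)\<^sup>2)"
  shows "(\<forall>p::real. p > 0 \<longrightarrow>
           (\<integral>\<^sup>+ x \<in> {0<..}. ennreal (\<bar>g_prod ts x\<bar> powr p / x powr \<beta>) \<partial>lborel)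
           \<ge> ennreal (1 / (2 * c powr ((1 - \<beta>) / 2)) *
                 (Gamma (p + 1) * Gamma ((1 - \<beta>) / 2) / Gamma ((1 - \<beta>) / 2 + p + 1))))
       \<and> Liminf at_top (\<lambda>p::real. ennreal (p powr ((1 - \<beta>) / 2)) *
           (\<integral>\<^sup>+ x \<in> {0<..}. ennreal (\<bar>g_prod ts x\<bar> powr p / x powr \<beta>) \<partial>lborel))
         \<ge> ennreal (Gamma ((1 - \<beta>) / 2) / (2 * c powr ((1 - \<beta>) / 2)))"
proof -
  define a where "a = (1 - \<beta>) / 2"
  have a: "0 < a" "a \<le> 1" using beta by (auto simp: a_def)
  have "1 / (ts 0)\<^sup>2 \<le> c" unfolding c_def
    using sum_le_suminf[OF summ, of "{0}"] by auto
  moreover have "1 / (ts 0)\<^sup>2 > 0" using pos by simp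
  ultimately have c: "c > 0" by linarith
  define I where "I p = (\<integral>\<^sup>+ x \<in> {0<..}. ennreal (\<bar>g_prod ts x\<bar> powr p / x powr \<beta>) \<partial>lborel)" for p
  define B where "B p = 1 / (2 * c powr a) * (Gamma (p + 1) * Gamma a / Gamma (a + p + 1))" for p
  have part1: "I p \<ge> ennreal (B p)" if p: "p > 0" for p
  proof -
    have "ennreal (B p) = (\<integral>\<^sup>+x. ennreal ((1 - c * x\<^sup>2) powr p / x powr \<beta>) * indicator {0..1/sqrt c} x \<partial>lborel)"
      unfolding beta_int[OF c beta p] by (simp add: B_def Beta_def a_def add_ac mult_ac)
    also have "\<dots> \<le> I p" unfolding I_def
    proof (intro nn_integral_mono)
      fix x :: real
      show "ennreal ((1 - c * x\<^sup>2) powr p / x powr \<beta>) * indicator {0..1/sqrt c} x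
         \<le> ennreal (\<bar>g_prod ts x\<bar> powr p / x powr \<beta>) * indicator {0<..} x"
      proof (cases "0 < x \<and> x < 1 / sqrt c")
        case True
        have "x\<^sup>2 < (1 / sqrt c)\<^sup>2" using True by (intro power_strict_mono) auto
        hence cx: "c * x\<^sup>2 < 1" using c by (simp add: power_divide field_simps)
        have "g_prod ts x \<ge> 1 - c * x\<^sup>2"
          using g_lower[OF pos mono summ, of x] cx unfolding c_def by simp
        hence "(1 - c * x\<^sup>2) powr p \<le> \<bar>g_prod ts x\<bar> powr p"
          using cx p by (intro powr_mono2) auto
        hence "(1 - c * x\<^sup>2) powr p / x powr \<beta> \<le> \<bar>g_prod ts x\<bar> powr p / x powr \<beta>"
          by (intro divide_right_mono) auto
        thus ?thesis using True by (auto simp: indicator_def intro: ennreal_leI)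
      next
        case False
        hence "x \<le> 0 \<or> x \<ge> 1 / sqrt c" by auto
        thus ?thesis
        proof
          assume "x \<le> 0" thus ?thesis by (cases "x = 0") (auto simp: indicator_def)
        next
          assume x: "x \<ge> 1 / sqrt c"
          show ?thesis
          proof (cases "x = 1 / sqrt c")
            case True
            have "c * x\<^sup>2 = 1" using True c by (simp add: power_divide)
            thus ?thesis by (simp add: indicator_def)
          next
            case False thus ?thesis using x by (auto simp: indicator_def)
          qed
        qed
      qed
    qed
    finally show ?thesis .
  qed
  define L where "L p = (p / (p + 1)) powr a * (Gamma a / (2 * c powr a))" for p
  have low: "ennreal (L p) \<le> ennreal (p powr a) * I p" if p: "p > 0" for p
  proof -
    have ga: "Gamma a > 0" using a by (intro Gamma_real_pos)
    have g1: "Gamma (p + 1) > 0" using p by (intro Gamma_real_pos) simp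
    have g2: "Gamma (a + p + 1) > 0" using p a by (intro Gamma_real_pos) simp
    have gi: "Gamma (a + p + 1) \<le> Gamma (p + 1) * (p + 1) powr a"
      using gamma_ineq[OF p] a by simp
    have "L p = p powr a / (p + 1) powr a * (Gamma a / (2 * c powr a))"
      unfolding L_def using p by (simp add: powr_divide)
    also have "p powr a / (p + 1) powr a \<le> p powr a * (Gamma (p + 1) / Gamma (a + p + 1))"
    proof -
      have "1 / (p + 1) powr a \<le> Gamma (p + 1) / Gamma (a + p + 1)"
        using gi g1 g2 p by (simp add: field_simps)
      from mult_left_mono[OF this, of "p powr a"] show ?thesis by simp
    qed
    hence "p powr a / (p + 1) powr a * (Gamma a / (2 * c powr a)) \<le>
       p powr a * (Gamma (p + 1) / Gamma (a + p + 1)) * (Gamma a / (2 * c powr a))"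
      using ga c by (intro mult_right_mono) auto
    also have "\<dots> = p powr a * B p" unfolding B_def by (simp add: field_simps)
    finally have "L p \<le> p powr a * B p" .
    hence "ennreal (L p) \<le> ennreal (p powr a * B p)" by (rule ennreal_leI)
    also have "\<dots> = ennreal (p powr a) * ennreal (B p)"
      by (rule ennreal_mult') simp
    also have "\<dots> \<le> ennreal (p powr a) * I p"
      by (intro mult_left_mono part1 p) simp
    finally show ?thesis .
  qed
  have "((\<lambda>p. ennreal (L p)) \<longlongrightarrow> ennreal (1 * (Gamma a / (2 * c powr a)))) at_top"
    unfolding L_def by (intro tendsto_ennrealI tendsto_mult lim1 tendsto_const)
  hence "Liminf at_top (\<lambda>p. ennreal (L p)) = ennreal (Gamma a / (2 * c powr a))"
    by (intro lim_imp_Liminf) auto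
  moreover have "Liminf at_top (\<lambda>p. ennreal (L p)) \<le> Liminf at_top (\<lambda>p. ennreal (p powr a) * I p)"
    by (intro Liminf_mono eventually_mono[OF eventually_gt_at_top[of 0]] low)
  ultimately have part2: "Liminf at_top (\<lambda>p. ennreal (p powr a) * I p) \<ge> ennreal (Gamma a / (2 * c powr a))"
    by simp
  show ?thesis using part1 part2 unfolding I_def B_def a_def by auto
qed

end
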